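(* For every target rate $r>0$, $P_{\rm r}>0$ and $\mathcal C_x\in[0,1)$, \[ \mathcal P_{\rm sr}(P_{\rm r},\mathcal C_x)\ge 1-\frac{e^{-\frac{\Psi_r(\mathcal C_x)}{P_{\rm s}\theta_{\rm sr}}}}{\Gamma(m_{\rm rr})\theta_{\rm rr}^{m_{\rm rr}}}\sum_{m=0}^{m_{\rm sr}-1}\sum_{k=0}^{m}\binom{m}{k}\frac{P_{\rm r}^k\,\Gamma(k+m_{\rm rr})\left(\frac{\Psi_r(\mathcal C_x)}{P_{\rm s}\theta_{\rm sr}}\right)^m}{\Gamma(m+1)\left(\frac{P_{\rm r}\Psi_r(\mathcal C_x)}{P_{\rm s}\theta_{\rm sr}}+\frac1{\theta_{\rm rr}}\right)^{k+m_{\rm rr}}}=:\mathcal P^{\rm LB}_{\rm sr}(P_{\rm r},\mathcal C_x). \]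
   Context: Let $P_{\rm s}>0$, $P_{\rm r}>0$ be the source and relay transmit powers. For links $ij\in\{\mathrm{sr},\mathrm{rr},\mathrm{rd},\mathrm{sd}\}$ let $g_{ij}$ be mutually independent random channel gains, $g_{ij}$ gamma distributed with integer shape parameter $m_{ij}\ge1$ and scale $\theta_{ij}=\pi_{ij}/m_{ij}$, where $\pi_{ij}=\mathbb E[g_{ij}]>0$; i.e. $g_{ij}$ has density $x^{m_{ij}-1}e^{-x/\theta_{ij}}/(\Gamma(m_{ij})\theta_{ij}^{m_{ij}})$ for $x\ge0$. For a circularity coefficient $\mathcal C_x\in[0,1)$ define $R_{\rm sr}(P_{\rm r},\mathcal C_x)=\tfrac12\log_2\frac{(P_{\rm s}g_{\rm sr}+P_{\rm r}g_{\rm rr}+1)^2-(P_{\rm r}g_{\rm rr}\mathcal C_x)^2}{(P_{\rm r}g_{\rm rr}+1)^2-(P_{\rm r}g_{\rm rr}\mathcal C_x)^2}$. For a target rate $r>0$ put $\gamma=2^{2r}-1$ and $\Psi_r(x)=\sqrt{1+\gamma(1-x^2)}-1$. The S–R outage probability is $\mathcal P_{\rm sr}=\mathbb P\{R_{\rm sr}<r\}$. *)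

theory Defs
  imports "HOL-Probability.Probability"
begin

definition gamma_density :: "nat \<Rightarrow> real \<Rightarrow> real \<Rightarrow> real" where
  "gamma_density m \<theta> x =
     (if x < 0 then 0 else x ^ (m - 1) * exp (- x / \<theta>) / (Gamma (real m) * \<theta> ^ m))"

definition R_sr :: "real \<Rightarrow> real \<Rightarrow> real \<Rightarrow> real \<Rightarrow> real \<Rightarrow> real" where
  "R_sr Ps Pr Cx gsr grr =
     1/2 * log 2 (((Ps * gsr + Pr * grr + 1)^2 - (Pr * grr * Cx)^2) /
                  ((Pr * grr + 1)^2 - (Pr * grr * Cx)^2))"

definition Psi :: "real \<Rightarrow> real \<Rightarrow> real" where
  "Psi r x = sqrt (1 + (2 powr (2 * r) - 1) * (1 - x^2)) - 1"

definition P_sr_LB ::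
  "real \<Rightarrow> real \<Rightarrow> nat \<Rightarrow> real \<Rightarrow> nat \<Rightarrow> real \<Rightarrow> real \<Rightarrow> real \<Rightarrow> real" where
  "P_sr_LB Ps Pr m_sr \<theta>_sr m_rr \<theta>_rr r Cx =
     (let a = Psi r Cx / (Ps * \<theta>_sr) in
      1 - exp (- a) / (Gamma (real m_rr) * \<theta>_rr ^ m_rr) *
        (\<Sum>m<m_sr. \<Sum>k\<le>m. real (m choose k) * Pr ^ k * Gamma (real k + real m_rr) * a ^ m
            / (Gamma (real m + 1) * (Pr * a + 1 / \<theta>_rr) ^ (k + m_rr))))"

end

theory Submission
  imports Defs
begin

lemma outage_point:
  fixes Ps Pr r C x y :: real
  assumes "Ps > 0" "Pr > 0" "r > 0" "0 \<le> C" "C < 1" "x \<ge> 0" "y \<ge> 0"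
    and "x < Psi r C / Ps * (1 + Pr * y)"
  shows "R_sr Ps Pr C x y < r"
proof -
  define \<gamma> where "\<gamma> = 2 powr (2*r) - 1"
  have g: "\<gamma> > 0" unfolding \<gamma>_def using assms(3) by simp
  define X where "X = Ps * x"
  define Y where "Y = Pr * y"
  have X0: "X \<ge> 0" "Y \<ge> 0" using assms unfolding X_def Y_def by auto
  have C2: "C^2 < 1" "0 \<le> C^2" using assms(4,5) by (auto simp: power_less_one_iff abs_square_less_1)
  define \<Psi> where "\<Psi> = Psi r C"
  have Psq: "(1 + \<Psi>)^2 = 1 + \<gamma> * (1 - C^2)"
    unfolding \<Psi>_def Psi_def \<gamma>_def[symmetric]
    using g C2 by (simp add: mult_nonneg_nonneg)
  have Psi0: "\<Psi> \<ge> 0" unfolding \<Psi>_def Psi_def \<gamma>_def[symmetric] using g C2 by simp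
  have XL: "X < \<Psi> * (1 + Y)"
    using assms(1,8) unfolding X_def Y_def \<Psi>_def by (simp add: field_simps)
  define D where "D = (Y+1)^2 - (Y*C)^2"
  define N where "N = (X+Y+1)^2 - (Y*C)^2"
  have YC: "Y*C \<le> Y" using X0 assms(5) by (simp add: mult_left_le)
  have YC0: "Y*C \<ge> 0" using X0 assms(4) by simp
  have D0: "D > 0" unfolding D_def
    using YC YC0 by (smt (verit) power_strict_mono zero_le_numeral zero_less_numeral)
  have N0: "N > 0" unfolding N_def using YC YC0 X0 by (smt (verit) power_strict_mono zero_le_numeral zero_less_numeral)
  have "N < (\<Psi> * (1 + Y) + Y + 1)^2 - (Y*C)^2" unfolding N_def
    using XL X0 by (smt (verit) power_strict_mono zero_le_numeral zero_less_numeral)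
  also have "\<dots> = (1+\<Psi>)^2 * (1+Y)^2 - (Y*C)^2" by (simp add: power2_eq_square algebra_simps)
  also have "\<dots> = (1+\<gamma>) * D - \<gamma> * C^2 * (1 + 2*Y)" unfolding Psq D_def
    by (simp add: power2_eq_square algebra_simps)
  also have "\<dots> \<le> (1+\<gamma>) * D" using g C2 X0 by simp
  finally have "N / D < 1 + \<gamma>" using D0 by (simp add: divide_less_eq mult.commute)
  hence "N/D < 2 powr (2*r)" unfolding \<gamma>_def by simp
  hence "log 2 (N/D) < 2*r" using N0 D0 by (simp add: log_less_iff)
  thus ?thesis unfolding R_sr_def N_def[symmetric] D_def[symmetric] X_def[symmetric] Y_def[symmetric]
    by (simp add: algebra_simps X_def Y_def N_def D_def)
qed

lemma erlang_tail_deriv: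
  fixes l x :: real
  shows "((\<lambda>x. - (exp (-(l*x)) * (\<Sum>n\<le>k. (l*x)^n / fact n))) has_real_derivative
          l^(Suc k) * x^k * exp (- l * x) / fact k) (at x)"
proof (induction k)
  case 0 show ?case by (auto intro!: derivative_eq_intros)
next
  case (Suc k)
  have eq: "(\<lambda>x. - (exp (-(l*x)) * (\<Sum>n\<le>Suc k. (l*x)^n / fact n))) =
    (\<lambda>x. - (exp (-(l*x)) * (\<Sum>n\<le>k. (l*x)^n / fact n)) - exp (-(l*x)) * ((l*x)^(Suc k) / fact (Suc k)))"
    by (simp add: algebra_simps)
  have d2: "((\<lambda>x. exp (-(l*x)) * ((l*x)^(Suc k) / fact (Suc k))) has_real_derivative
      (- l * exp (-(l*x)) * ((l*x)^(Suc k) / fact (Suc k)) + exp (-(l*x)) * (real (Suc k) * (l*x)^k * l / fact (Suc k)))) (at x)"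
    by (auto intro!: derivative_eq_intros simp del: fact_Suc power_Suc) (simp only: diff_divide_distrib; simp add: algebra_simps)
  have "real (Suc k) * (l*x)^k * l / fact (Suc k) = (l*x)^k * l / fact k"
    by (simp add: field_simps del: of_nat_Suc)
  hence "l^(Suc k) * x^k * exp (- l * x) / fact k -
      (- l * exp (-(l*x)) * ((l*x)^(Suc k) / fact (Suc k)) + exp (-(l*x)) * (real (Suc k) * (l*x)^k * l / fact (Suc k)))
      = l^(Suc (Suc k)) * x^(Suc k) * exp (- l * x) / fact (Suc k)"
    by (simp add: power_mult_distrib algebra_simps \<open>real (Suc k) * (l*x)^k * l / fact (Suc k) = (l*x)^k * l / fact k\<close> del: of_nat_Suc)
  with DERIV_diff[OF Suc d2] show ?case unfolding eq by simp
qed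

lemma erlang_tail_lim:
  fixes l :: real assumes "l > 0"
  shows "((\<lambda>x. - (exp (-(l*x)) * (\<Sum>n\<le>k. (l*x)^n / fact n))) \<longlongrightarrow> 0) at_top"
proof -
  have lt: "filterlim (\<lambda>x::real. l*x) at_top at_top"
    using assms by (intro filterlim_tendsto_pos_mult_at_top[OF tendsto_const]) (auto simp: filterlim_ident)
  have "((\<lambda>x. (\<Sum>n\<le>k. ((l*x)^n / exp (l*x)) / fact n)) \<longlongrightarrow> (\<Sum>n\<le>k. 0 / fact n)) at_top"
    by (intro tendsto_intros filterlim_compose[OF tendsto_power_div_exp_0 lt]) simp
  hence "((\<lambda>x. (\<Sum>n\<le>k. ((l*x)^n / exp (l*x)) / fact n)) \<longlongrightarrow> 0) at_top" by simp
  hence "((\<lambda>x. - (\<Sum>n\<le>k. ((l*x)^n / exp (l*x)) / fact n)) \<longlongrightarrow> 0) at_top"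
    using tendsto_minus by fastforce
  moreover have "(\<lambda>x. - (\<Sum>n\<le>k. ((l*x)^n / exp (l*x)) / fact n)) = (\<lambda>x. - (exp (-(l*x)) * (\<Sum>n\<le>k. (l*x)^n / fact n)))"
    by (auto simp: sum_distrib_left exp_minus field_simps intro!: sum.cong)
  ultimately show ?thesis by simp
qed

lemma erlang_tail:
  fixes l t :: real assumes "l > 0" "t \<ge> 0"
  shows "(\<integral>\<^sup>+x. ennreal (erlang_density k l x) * indicator {t..} x \<partial>lborel)
       = ennreal (exp (-(l*t)) * (\<Sum>n\<le>k. (l*t)^n / fact n))"
proof -
  have "(\<integral>\<^sup>+x. ennreal (erlang_density k l x) * indicator {t..} x \<partial>lborel)
      = ennreal (0 - (- (exp (-(l*t)) * (\<Sum>n\<le>k. (l*t)^n / fact n))))"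
  proof (rule nn_integral_FTC_atLeast)
    fix x assume "t \<le> x"
    hence "x \<ge> 0" using assms by simp
    thus "((\<lambda>x. - (exp (-(l*x)) * (\<Sum>n\<le>k. (l*x)^n / fact n))) has_real_derivative erlang_density k l x) (at x)"
      using erlang_tail_deriv[of l k x] by (simp add: erlang_density_def)
    show "0 \<le> erlang_density k l x" using assms by simp
  qed (use erlang_tail_lim[OF assms(1)] in auto)
  thus ?thesis by simp
qed

lemma gamma_erlang:
  assumes "m \<ge> 1" "\<theta> > 0"
  shows "gamma_density m \<theta> = erlang_density (m-1) (1/\<theta>)"
proof
  fix x :: real
  obtain k where m: "m = Suc k" using assms(1) by (cases m) auto
  have G: "Gamma (real m) = fact k" unfolding m using Gamma_fact[of k] by (simp add: add.commute)
  show "gamma_density m \<theta> x = erlang_density (m-1) (1/\<theta>) x"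
    unfolding gamma_density_def erlang_density_def G using assms(2)
    by (simp add: m field_simps power_divide)
qed

lemma erlang_exp_moment:
  fixes l b :: real assumes "l > 0" "b \<ge> 0"
  shows "(\<integral>\<^sup>+y. ennreal (erlang_density k l y * (y^j * exp (-(b*y)))) \<partial>lborel)
     = ennreal (l^(Suc k) / fact k * fact (k+j) / (l+b)^(Suc (k+j)))"
proof -
  have lb: "l + b > 0" using assms by simp
  have eq: "erlang_density k l y * (y^j * exp (-(b*y))) = (l/(l+b))^(Suc k) * (erlang_density k (l+b) y * y^j)" for y
  proof (cases "y < 0")
    case False
    define E where "E = exp (- (l+b) * y)"
    have "exp (- l * y) * exp (-(b*y)) = E" unfolding E_def by (simp add: exp_add[symmetric] algebra_simps)
    hence L: "erlang_density k l y * (y^j * exp (-(b*y))) = l ^ Suc k * (y ^ k * y ^ j * E) / fact k"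
      using False unfolding erlang_density_def by (simp add: algebra_simps)
    have R: "erlang_density k (l+b) y * y^j = (l+b) ^ Suc k * (y ^ k * y ^ j * E) / fact k"
      using False unfolding erlang_density_def E_def by (simp add: algebra_simps)
    have P: "(l/(l+b))^(Suc k) * (l+b) ^ Suc k = l ^ Suc k" using lb by (simp add: power_divide)
    have "(l/(l+b))^(Suc k) * ((l+b) ^ Suc k * (y ^ k * y ^ j * E) / fact k)
        = ((l/(l+b))^(Suc k) * (l+b) ^ Suc k) * (y ^ k * y ^ j * E) / fact k"
      by (simp only: times_divide_eq_right mult.assoc)
    thus ?thesis unfolding L R P by simp
  qed (simp add: erlang_density_def)
  have "(\<integral>\<^sup>+y. ennreal (erlang_density k l y * (y^j * exp (-(b*y)))) \<partial>lborel)
      = (\<integral>\<^sup>+y. ennreal ((l/(l+b))^(Suc k)) * ennreal (erlang_density k (l+b) y * y^j) \<partial>lborel)"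
    unfolding eq using assms lb by (intro nn_integral_cong ennreal_mult') simp
  also have "\<dots> = ennreal ((l/(l+b))^(Suc k)) * (\<integral>\<^sup>+y. ennreal (erlang_density k (l+b) y * y^j) \<partial>lborel)"
    by (rule nn_integral_cmult) simp
  also have "\<dots> = ennreal ((l/(l+b))^(Suc k)) * ennreal (fact (k + j) / (fact k * (l+b) ^ j))"
    using nn_integral_erlang_ith_moment[OF lb, of k j] by simp
  also have "\<dots> = ennreal ((l/(l+b))^(Suc k) * (fact (k + j) / (fact k * (l+b) ^ j)))"
    using lb assms by (subst ennreal_mult') simp_all
  also have "(l/(l+b))^(Suc k) * (fact (k + j) / (fact k * (l+b) ^ j)) = l^(Suc k) / fact k * fact (k+j) / (l+b)^(Suc (k+j))"
    using lb by (simp add: power_divide power_add field_simps)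
  finally show ?thesis .
qed

lemma alg: fixes E B P F A fn f2 X Y :: real
  assumes "X > 0" "Y > 0" "fn > 0" "f2 > 0"
  shows "E / (f2 * (1/Y)) * (B*P*F*A/(fn*X)) = B*A*E/fn*P*(Y/f2*F/X)"
  using assms by (simp add: field_simps)

theorem lemma3:
  fixes M :: "'a measure"
    and g_sr g_rr :: "'a \<Rightarrow> real"
    and Ps Pr r Cx \<pi>_sr \<pi>_rr :: real
    and m_sr m_rr :: nat
  assumes "prob_space M"
    and "Ps > 0" and "Pr > 0" and "r > 0"
    and "0 \<le> Cx" and "Cx < 1"
    and "m_sr \<ge> 1" and "m_rr \<ge> 1"
    and "\<pi>_sr > 0" and "\<pi>_rr > 0"
    and "distributed M lborel g_sr (gamma_density m_sr (\<pi>_sr / real m_sr))"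
    and "distributed M lborel g_rr (gamma_density m_rr (\<pi>_rr / real m_rr))"
    and "prob_space.indep_var M borel g_sr borel g_rr"
  shows "measure M {\<omega> \<in> space M. R_sr Ps Pr Cx (g_sr \<omega>) (g_rr \<omega>) < r}
         \<ge> P_sr_LB Ps Pr m_sr (\<pi>_sr / real m_sr) m_rr (\<pi>_rr / real m_rr) r Cx"
proof -
  interpret P: prob_space M by fact
  have LL: "pair_sigma_finite lborel lborel" by (simp add: pair_sigma_finite_def lborel.sigma_finite_measure_axioms)
  define \<theta>1 where "\<theta>1 = \<pi>_sr / real m_sr"
  define \<theta>2 where "\<theta>2 = \<pi>_rr / real m_rr"
  have th1: "\<theta>1 > 0" "\<theta>2 > 0" using assms(7-10) by (auto simp: \<theta>1_def \<theta>2_def)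
  define k1 where "k1 = m_sr - 1"
  define k2 where "k2 = m_rr - 1"
  have mk: "m_sr = Suc k1" "m_rr = Suc k2" using assms(7,8) by (auto simp: k1_def k2_def)
  define l1 where "l1 = 1 / \<theta>1"
  define l2 where "l2 = 1 / \<theta>2"
  have l12: "l1 > 0" "l2 > 0" using th1 by (auto simp: l1_def l2_def)
  have D1: "distributed M lborel g_sr (erlang_density k1 l1)"
    using assms(11)[folded \<theta>1_def] gamma_erlang[OF assms(7) th1(1)] by (simp add: k1_def l1_def)
  have D2: "distributed M lborel g_rr (erlang_density k2 l2)"
    using assms(12)[folded \<theta>2_def] gamma_erlang[OF assms(8) th1(2)] by (simp add: k2_def l2_def)
  have meas[measurable]: "g_sr \<in> borel_measurable M" "g_rr \<in> borel_measurable M"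
    using distributed_measurable[OF D1] distributed_measurable[OF D2] by auto
  have indep: "P.indep_var lborel g_sr lborel g_rr"
    using assms(13) unfolding P.indep_var_eq by simp
  have joint: "distributed M (lborel \<Otimes>\<^sub>M lborel) (\<lambda>\<omega>. (g_sr \<omega>, g_rr \<omega>))
      (\<lambda>(x,y). ennreal (erlang_density k1 l1 x) * ennreal (erlang_density k2 l2 y))"
    by (rule P.distributed_joint_indep[OF _ _ D1 D2 indep]) (auto intro: lborel.sigma_finite_measure_axioms)
  define \<gamma> where "\<gamma> = 2 powr (2*r) - 1"
  have g: "\<gamma> > 0" unfolding \<gamma>_def using assms(4) by simp
  have C2: "Cx^2 \<le> 1" using assms(5,6) by (simp add: power_le_one)
  have Psi0: "Psi r Cx \<ge> 0" unfolding Psi_def \<gamma>_def[symmetric] using g C2 by simp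
  define c where "c = Psi r Cx / Ps"
  have c0: "c \<ge> 0" using Psi0 assms(2) by (simp add: c_def)
  define a where "a = l1 * c"
  define b where "b = a * Pr"
  have ab: "a \<ge> 0" "b \<ge> 0" using c0 l12 assms(3) by (auto simp: a_def b_def)
  define Q where "Q y = exp (-(l1*(c*(1+Pr*y)))) * (\<Sum>n\<le>k1. (l1*(c*(1+Pr*y)))^n / fact n)" for y
  define B where "B = {\<omega>\<in>space M. c*(1+Pr*g_rr \<omega>) \<le> g_sr \<omega>}"
  define S where "S = {p\<in>space (lborel \<Otimes>\<^sub>M lborel). c*(1+Pr * snd p) \<le> fst p}"
  have S_meas: "S \<in> sets (lborel \<Otimes>\<^sub>M lborel)" unfolding S_def by measurable
  have "emeasure M B = emeasure M ((\<lambda>\<omega>. (g_sr \<omega>, g_rr \<omega>)) -` S \<inter> space M)"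
    by (auto simp: B_def S_def space_pair_measure intro!: arg_cong[where f="emeasure M"])
  also have "\<dots> = (\<integral>\<^sup>+p. ((\<lambda>(x,y). ennreal (erlang_density k1 l1 x) * ennreal (erlang_density k2 l2 y)) p) * indicator S p \<partial>(lborel \<Otimes>\<^sub>M lborel))"
    by (rule distributed_emeasure[OF joint S_meas])
  also have "\<dots> = (\<integral>\<^sup>+y. \<integral>\<^sup>+x. ennreal (erlang_density k1 l1 x) * ennreal (erlang_density k2 l2 y) * indicator S (x,y) \<partial>lborel \<partial>lborel)"
    by (subst pair_sigma_finite.nn_integral_snd[OF LL, symmetric]) (use S_meas in auto)
  also have "\<dots> = (\<integral>\<^sup>+y. ennreal (erlang_density k2 l2 y * Q y) \<partial>lborel)"
  proof (intro nn_integral_cong)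
    fix y :: real
    show "(\<integral>\<^sup>+x. ennreal (erlang_density k1 l1 x) * ennreal (erlang_density k2 l2 y) * indicator S (x,y) \<partial>lborel)
      = ennreal (erlang_density k2 l2 y * Q y)"
    proof (cases "y < 0")
      case True
      thus ?thesis by (simp add: erlang_density_def)
    next
      case False
      have t0: "c*(1+Pr*y) \<ge> 0" using False c0 assms(3) by simp
      have Q0: "Q y \<ge> 0" unfolding Q_def using t0 l12 by (intro mult_nonneg_nonneg sum_nonneg) auto
      have "(\<integral>\<^sup>+x. ennreal (erlang_density k1 l1 x) * ennreal (erlang_density k2 l2 y) * indicator S (x,y) \<partial>lborel)
        = (\<integral>\<^sup>+x. ennreal (erlang_density k2 l2 y) * (ennreal (erlang_density k1 l1 x) * indicator {c*(1+Pr*y)..} x) \<partial>lborel)"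
        using l12 by (intro nn_integral_cong) (auto simp: S_def space_pair_measure mult.commute split: split_indicator)
      also have "\<dots> = ennreal (erlang_density k2 l2 y) * (\<integral>\<^sup>+x. ennreal (erlang_density k1 l1 x) * indicator {c*(1+Pr*y)..} x \<partial>lborel)"
        by (rule nn_integral_cmult) simp
      also have "\<dots> = ennreal (erlang_density k2 l2 y) * ennreal (Q y)"
        unfolding Q_def by (subst erlang_tail[OF l12(1) t0]) simp
      also have "\<dots> = ennreal (erlang_density k2 l2 y * Q y)" using l12 Q0 by (simp add: ennreal_mult)
      finally show ?thesis .
    qed
  qed
  also have "\<dots> = ennreal (\<Sum>n\<le>k1. \<Sum>k\<le>n. (real (n choose k) * a^n * exp (-a) / fact n * Pr^k) *
        (l2^(Suc k2) / fact k2 * fact (k2+k) / (l2+b)^(Suc (k2+k))))"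
  proof -
    define coef where "coef n k = real (n choose k) * a^n * exp (-a) / fact n * Pr^k" for n k :: nat
    have coef0: "coef n k \<ge> 0" for n k using ab assms(3) by (simp add: coef_def)
    have en: "erlang_density k2 l2 y * (y^k * exp (-(b*y))) \<ge> 0" for y :: real and k
      using l12 by (cases "y < 0") (auto simp: erlang_density_def)
    have Qexp: "Q y = (\<Sum>n\<le>k1. \<Sum>k\<le>n. coef n k * (y^k * exp (-(b*y))))" for y
    proof -
      have e: "exp(-(l1*(c*(1+Pr*y)))) = exp(-a) * exp(-(b*y))"
        by (simp add: a_def b_def algebra_simps exp_add[symmetric])
      have p: "(l1*(c*(1+Pr*y)))^n = a^n * (\<Sum>k\<le>n. real(n choose k) * (Pr*y)^k)" for n
        using binomial_ring[of "Pr*y" 1 n] by (simp add: a_def power_mult_distrib add.commute mult.assoc)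
      have "Q y = (\<Sum>n\<le>k1. exp(-a) * exp(-(b*y)) * (a^n * (\<Sum>k\<le>n. real(n choose k) * (Pr*y)^k) / fact n))"
        unfolding Q_def e p sum_distrib_left ..
      also have "\<dots> = (\<Sum>n\<le>k1. \<Sum>k\<le>n. coef n k * (y^k * exp (-(b*y))))"
      proof (intro sum.cong refl)
        fix n assume "n \<in> {..k1}"
        have "exp(-a) * exp(-(b*y)) * (a^n * (\<Sum>k\<le>n. real(n choose k) * (Pr*y)^k) / fact n)
          = (\<Sum>k\<le>n. exp(-a) * exp(-(b*y)) * (a^n * (real(n choose k) * (Pr*y)^k) / fact n))"
          by (simp add: sum_distrib_left sum_divide_distrib)
        also have "\<dots> = (\<Sum>k\<le>n. coef n k * (y^k * exp (-(b*y))))"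
          by (intro sum.cong refl) (simp add: coef_def power_mult_distrib)
        finally show "exp(-a) * exp(-(b*y)) * (a^n * (\<Sum>k\<le>n. real(n choose k) * (Pr*y)^k) / fact n)
          = (\<Sum>k\<le>n. coef n k * (y^k * exp (-(b*y))))" .
      qed
      finally show ?thesis .
    qed
    have termI: "(\<integral>\<^sup>+y. ennreal (coef n k * (erlang_density k2 l2 y * (y^k * exp (-(b*y))))) \<partial>lborel)
       = ennreal (coef n k * (l2^(Suc k2) / fact k2 * fact (k2+k) / (l2+b)^(Suc (k2+k))))" for n k
    proof -
      have "(\<integral>\<^sup>+y. ennreal (coef n k * (erlang_density k2 l2 y * (y^k * exp (-(b*y))))) \<partial>lborel)
        = (\<integral>\<^sup>+y. ennreal (coef n k) * ennreal (erlang_density k2 l2 y * (y^k * exp (-(b*y)))) \<partial>lborel)"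
        using coef0 by (intro nn_integral_cong ennreal_mult') auto
      also have "\<dots> = ennreal (coef n k) * (\<integral>\<^sup>+y. ennreal (erlang_density k2 l2 y * (y^k * exp (-(b*y)))) \<partial>lborel)"
        by (rule nn_integral_cmult) simp
      also have "\<dots> = ennreal (coef n k) * ennreal (l2^(Suc k2) / fact k2 * fact (k2+k) / (l2+b)^(Suc (k2+k)))"
        by (simp add: erlang_exp_moment[OF l12(2) ab(2)])
      also have "\<dots> = ennreal (coef n k * (l2^(Suc k2) / fact k2 * fact (k2+k) / (l2+b)^(Suc (k2+k))))"
        using coef0 by (rule ennreal_mult'[symmetric])
      finally show ?thesis .
    qed
    have "(\<integral>\<^sup>+y. ennreal (erlang_density k2 l2 y * Q y) \<partial>lborel)
      = (\<integral>\<^sup>+y. (\<Sum>n\<le>k1. \<Sum>k\<le>n. ennreal (coef n k * (erlang_density k2 l2 y * (y^k * exp (-(b*y)))))) \<partial>lborel)"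
    proof (intro nn_integral_cong)
      fix y :: real
      have "erlang_density k2 l2 y * Q y = (\<Sum>n\<le>k1. \<Sum>k\<le>n. coef n k * (erlang_density k2 l2 y * (y^k * exp (-(b*y)))))"
        unfolding Qexp by (simp add: sum_distrib_left algebra_simps)
      thus "ennreal (erlang_density k2 l2 y * Q y) = (\<Sum>n\<le>k1. \<Sum>k\<le>n. ennreal (coef n k * (erlang_density k2 l2 y * (y^k * exp (-(b*y))))))"
        using coef0 en by (simp add: sum_nonneg)
    qed
    also have "\<dots> = (\<Sum>n\<le>k1. \<Sum>k\<le>n. (\<integral>\<^sup>+y. ennreal (coef n k * (erlang_density k2 l2 y * (y^k * exp (-(b*y))))) \<partial>lborel))"
      by (simp add: nn_integral_sum)
    also have "\<dots> = ennreal (\<Sum>n\<le>k1. \<Sum>k\<le>n. coef n k * (l2^(Suc k2) / fact k2 * fact (k2+k) / (l2+b)^(Suc (k2+k))))"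
      using coef0 l12 ab by (simp add: termI sum_nonneg)
    finally show ?thesis unfolding coef_def .
  qed
  finally have eB: "emeasure M B = ennreal (\<Sum>n\<le>k1. \<Sum>k\<le>n. (real (n choose k) * a^n * exp (-a) / fact n * Pr^k) *
        (l2^(Suc k2) / fact k2 * fact (k2+k) / (l2+b)^(Suc (k2+k))))" (is "_ = ennreal ?S") .
  have S0: "?S \<ge> 0" using ab l12 assms(3) by (intro sum_nonneg mult_nonneg_nonneg divide_nonneg_nonneg) auto
  have B_meas: "B \<in> sets M" unfolding B_def by measurable
  have mB: "measure M B = ?S" using eB S0 by (simp add: P.emeasure_eq_measure)
  define N1 where "N1 = {\<omega>\<in>space M. g_sr \<omega> < 0}"
  define N2 where "N2 = {\<omega>\<in>space M. g_rr \<omega> < 0}"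
  have N_meas: "N1 \<in> sets M" "N2 \<in> sets M" unfolding N1_def N2_def by simp_all
  have "emeasure M N1 = emeasure M (g_sr -` {..<0} \<inter> space M)"
    by (auto simp: N1_def intro!: arg_cong[where f="emeasure M"])
  also have "\<dots> = (\<integral>\<^sup>+x. ennreal (erlang_density k1 l1 x) * indicator {..<0} x \<partial>lborel)"
    by (rule distributed_emeasure[OF D1]) simp
  also have "\<dots> = (\<integral>\<^sup>+(x::real). 0 \<partial>lborel)"
    by (intro nn_integral_cong) (auto simp: erlang_density_def split: split_indicator)
  finally have mN1: "measure M N1 = 0" by (simp add: P.emeasure_eq_measure)
  have "emeasure M N2 = emeasure M (g_rr -` {..<0} \<inter> space M)"
    by (auto simp: N2_def intro!: arg_cong[where f="emeasure M"])
  also have "\<dots> = (\<integral>\<^sup>+x. ennreal (erlang_density k2 l2 x) * indicator {..<0} x \<partial>lborel)"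
    by (rule distributed_emeasure[OF D2]) simp
  also have "\<dots> = (\<integral>\<^sup>+(x::real). 0 \<partial>lborel)"
    by (intro nn_integral_cong) (auto simp: erlang_density_def split: split_indicator)
  finally have mN2: "measure M N2 = 0" by (simp add: P.emeasure_eq_measure)
  define Out where "Out = {\<omega> \<in> space M. R_sr Ps Pr Cx (g_sr \<omega>) (g_rr \<omega>) < r}"
  have O_meas: "Out \<in> sets M" unfolding Out_def R_sr_def by measurable
  have sub: "space M - (B \<union> N1 \<union> N2) \<subseteq> Out"
  proof
    fix \<omega> assume w: "\<omega> \<in> space M - (B \<union> N1 \<union> N2)"
    hence "g_sr \<omega> \<ge> 0" "g_rr \<omega> \<ge> 0" "g_sr \<omega> < Psi r Cx / Ps * (1 + Pr * g_rr \<omega>)"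
      by (auto simp: B_def N1_def N2_def c_def)
    hence "R_sr Ps Pr Cx (g_sr \<omega>) (g_rr \<omega>) < r"
      by (intro outage_point[OF assms(2-6)])
    thus "\<omega> \<in> Out" using w by (simp add: Out_def)
  qed
  have s1: "measure M (B \<union> N1 \<union> N2) \<le> measure M (B \<union> N1) + measure M N2"
    by (rule measure_Un_le) (use B_meas N_meas in auto)
  have s2: "measure M (B \<union> N1) \<le> measure M B + measure M N1"
    by (rule measure_Un_le) (use B_meas N_meas in auto)
  have "measure M (B \<union> N1 \<union> N2) \<le> measure M B + measure M N1 + measure M N2"
    using s1 s2 by linarith
  hence "1 - ?S \<le> measure M (space M - (B \<union> N1 \<union> N2))"
    using B_meas N_meas mB mN1 mN2 by (subst P.prob_compl) auto
  also have "\<dots> \<le> measure M Out" using sub O_meas by (rule P.finite_measure_mono)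
  finally have main: "1 - ?S \<le> measure M Out" .
  have LB: "P_sr_LB Ps Pr m_sr \<theta>1 m_rr \<theta>2 r Cx = 1 - ?S"
  proof -
    have a': "Psi r Cx / (Ps * \<theta>1) = a" unfolding a_def l1_def c_def by simp
    have t2: "1 / \<theta>2 = l2" "\<theta>2 = 1 / l2" using th1 by (auto simp: l2_def)
    have G1: "Gamma (real m_rr) = fact k2" using Gamma_fact[of k2] by (simp add: mk add.commute)
    have G2: "Gamma (real k + real m_rr) = fact (k2 + k)" for k
      using Gamma_fact[of "k2+k"] by (simp add: mk add.commute add.left_commute)
    have G3: "Gamma (real n + 1) = fact n" for n using Gamma_fact[of n] by (simp add: add.commute)
    have lt: "{..<m_sr} = {..k1}" by (auto simp: mk)
    have "exp (- a) / (Gamma (real m_rr) * \<theta>2 ^ m_rr) *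
        (\<Sum>m<m_sr. \<Sum>k\<le>m. real (m choose k) * Pr ^ k * Gamma (real k + real m_rr) * a ^ m
            / (Gamma (real m + 1) * (Pr * a + 1 / \<theta>2) ^ (k + m_rr))) = ?S"
      unfolding lt sum_distrib_left G1 G2 G3 t2(1)
    proof (intro sum.cong refl)
      fix n k :: nat
      have e1: "(Pr*a + l2)^(k + m_rr) = (l2+b)^Suc(k2+k)" by (simp add: b_def mk add.commute mult.commute)
      have e2: "\<theta>2 ^ m_rr = 1 / l2^Suc k2" by (simp add: t2(2) mk power_one_over)
      have pos: "(l2+b)^Suc(k2+k) > 0" "l2^Suc k2 > 0" "(fact n :: real) > 0" "(fact k2 :: real) > 0"
        using l12 ab by auto
      show "exp (- a) / (fact k2 * \<theta>2 ^ m_rr) * (real (n choose k) * Pr ^ k * fact (k2 + k) * a ^ n /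
           (fact n * (Pr * a + l2) ^ (k + m_rr))) =
         real (n choose k) * a ^ n * exp (- a) / fact n * Pr ^ k *
         (l2 ^ Suc k2 / fact k2 * fact (k2 + k) / (l2 + b) ^ Suc (k2 + k))"
        unfolding e1 e2 by (rule alg[OF pos])
    qed
    thus ?thesis unfolding P_sr_LB_def Let_def a' by simp
  qed
  show ?thesis using main LB by (simp add: Out_def \<theta>1_def \<theta>2_def)
qed
end
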